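(* Let $n\ge 2$ be an integer and $A\subseteq L_n$. If $(X_n,\tau(A))$ is $\sigma$-compact, then $(X_n,\tau(A))$ is second-countable.
   Context: For $\overline{x},\overline{a}\in\mathbb R^n$ let $|\overline{x}-\overline{a}|$ be the Euclidean distance and $B(\overline{a},\epsilon)=\{\overline{x}\in\mathbb R^n:|\overline{x}-\overline{a}|<\epsilon\}$. Let $P_n=\{\overline{x}\in\mathbb R^n: x_n>0\}$, $L_n=\{\overline{x}\in\mathbb R^n: x_n=0\}$, $X_n=P_n\cup L_n$. For $\overline{a}\in L_n$ and $\epsilon>0$ put $\overline{a(\epsilon)}=(a_1,\dots,a_{n-1},\epsilon)$ and $\tilde B(\overline{a},\epsilon)=\{\overline{a}\}\cup B(\overline{a(\epsilon)},\epsilon)$. For $A\subseteq L_n$, the topology $\tau(A)$ on $X_n$ is generated by the local bases: at $\overline{a}\in P_n$, the sets $B(\overline{a},\epsilon)$ with $0<\epsilon<a_n$; at $\overline{a}\in A$, the sets $B(\overline{a},\epsilon)\cap X_n$ with $\epsilon>0$; at $\overline{a}\in L_n\setminus A$, the sets $\tilde B(\overline{a},\epsilon)$ with $\epsilon>0$. *)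

theory Defs
  imports "HOL-Analysis.Analysis"
begin

text \<open>Points of R^n are represented as functions nat => real vanishing at indices >= n;
  coordinate x_i of the paper (1 <= i <= n) is x (i - 1). In particular x_n is x (n - 1).\<close>

definition Rn :: "nat \<Rightarrow> (nat \<Rightarrow> real) set" where
  "Rn n = {x. \<forall>i\<ge>n. x i = 0}"

definition edist :: "nat \<Rightarrow> (nat \<Rightarrow> real) \<Rightarrow> (nat \<Rightarrow> real) \<Rightarrow> real" where
  "edist n x a = sqrt (\<Sum>i<n. (x i - a i)^2)"

definition Ball_n :: "nat \<Rightarrow> (nat \<Rightarrow> real) \<Rightarrow> real \<Rightarrow> (nat \<Rightarrow> real) set" where
  "Ball_n n a e = {x \<in> Rn n. edist n x a < e}"

definition Pn :: "nat \<Rightarrow> (nat \<Rightarrow> real) set" where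
  "Pn n = {x \<in> Rn n. x (n - 1) > 0}"

definition Ln :: "nat \<Rightarrow> (nat \<Rightarrow> real) set" where
  "Ln n = {x \<in> Rn n. x (n - 1) = 0}"

definition Xn :: "nat \<Rightarrow> (nat \<Rightarrow> real) set" where
  "Xn n = Pn n \<union> Ln n"

definition lift_pt :: "nat \<Rightarrow> (nat \<Rightarrow> real) \<Rightarrow> real \<Rightarrow> (nat \<Rightarrow> real)" where
  "lift_pt n a e = a((n - 1) := e)"

definition tildeBall :: "nat \<Rightarrow> (nat \<Rightarrow> real) \<Rightarrow> real \<Rightarrow> (nat \<Rightarrow> real) set" where
  "tildeBall n a e = {a} \<union> Ball_n n (lift_pt n a e) e"

text \<open>The union of all the local bases; tau(A) is the topology generated by it.\<close>
definition nbhd_sets :: "nat \<Rightarrow> (nat \<Rightarrow> real) set \<Rightarrow> (nat \<Rightarrow> real) set set" where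
  "nbhd_sets n A =
     {Ball_n n a e | a e. a \<in> Pn n \<and> 0 < e \<and> e < a (n - 1)}
   \<union> {Ball_n n a e \<inter> Xn n | a e. a \<in> A \<and> 0 < e}
   \<union> {tildeBall n a e | a e. a \<in> Ln n - A \<and> 0 < e}"

definition tau :: "nat \<Rightarrow> (nat \<Rightarrow> real) set \<Rightarrow> (nat \<Rightarrow> real) topology" where
  "tau n A = topology_generated_by (nbhd_sets n A)"

definition sigma_compact_space :: "'a topology \<Rightarrow> bool" where
  "sigma_compact_space X \<longleftrightarrow>
     (\<exists>\<K>. countable \<K> \<and> (\<forall>K\<in>\<K>. compactin X K) \<and> \<Union>\<K> = topspace X)"

end

theory Submission
  imports Defs
begin


lemma edist_L2: "edist n x a = L2_set (\<lambda>i. x i - a i) {..<n}"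
  by (simp add: edist_def L2_set_def)

lemma edist_sym: "edist n x a = edist n a x"
  unfolding edist_def by (simp add: power2_commute)

lemma edist_self[simp]: "edist n x x = 0"
  unfolding edist_def by simp

lemma edist_nonneg: "0 \<le> edist n x a"
  unfolding edist_L2 by simp

lemma edist_tri: "edist n x z \<le> edist n x y + edist n y z"
proof -
  have "edist n x z = L2_set (\<lambda>i. (x i - y i) + (y i - z i)) {..<n}"
    unfolding edist_L2 by simp
  also have "\<dots> \<le> edist n x y + edist n y z"
    unfolding edist_L2 by (rule L2_set_triangle_ineq)
  finally show ?thesis .
qed

lemma edist_coord: assumes "i < n" shows "\<bar>x i - y i\<bar> \<le> edist n x y"
proof -
  have "\<bar>x i - y i\<bar> \<le> L2_set (\<lambda>i. \<bar>x i - y i\<bar>) {..<n}"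
    by (rule member_le_L2_set) (use assms in auto)
  also have "\<dots> = edist n x y" unfolding edist_L2 L2_set_def by simp
  finally show ?thesis .
qed

lemma edist_one_coord:
  assumes "x \<in> Rn n" "y \<in> Rn n" "j < n" "\<And>i. i \<noteq> j \<Longrightarrow> x i = y i"
  shows "edist n x y = \<bar>x j - y j\<bar>"
proof -
  have "(\<Sum>i<n. (x i - y i)^2) = (\<Sum>i\<in>{j}. (x i - y i)^2)"
    by (rule sum.mono_neutral_right) (use assms in auto)
  then show ?thesis unfolding edist_def by simp
qed

context fixes n :: nat and A :: "(nat \<Rightarrow> real) set" assumes n2: "n \<ge> 2" and AL: "A \<subseteq> Ln n"
begin

lemma nlt: "n - 1 < n" using n2 by simp

lemma lift_Rn: "a \<in> Rn n \<Longrightarrow> lift_pt n a e \<in> Rn n"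
  using nlt unfolding Rn_def lift_pt_def by auto

lemma ball_sub_P:
  assumes "y \<in> Ball_n n c r" "r \<le> c (n - 1)"
  shows "y \<in> Pn n"
proof -
  have "\<bar>y (n-1) - c (n-1)\<bar> \<le> edist n y c" by (rule edist_coord[OF nlt])
  with assms show ?thesis unfolding Ball_n_def Pn_def by auto
qed

lemma lift_ball_P: "y \<in> Ball_n n (lift_pt n a e) e \<Longrightarrow> y \<in> Pn n"
  by (rule ball_sub_P) (auto simp: lift_pt_def)

lemma edist_lift: assumes "a \<in> Rn n" shows "edist n (lift_pt n a d) (lift_pt n a e) = \<bar>d - e\<bar>"
  using edist_one_coord[OF lift_Rn[OF assms] lift_Rn[OF assms] nlt] by (simp add: lift_pt_def)

lemma edist_lift0: assumes "a \<in> Ln n" shows "edist n a (lift_pt n a e) = \<bar>e\<bar>"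
proof -
  have "a \<in> Rn n" "a (n-1) = 0" using assms by (auto simp: Ln_def)
  then show ?thesis
  using edist_one_coord[OF _ lift_Rn nlt, of a a e] by (simp add: lift_pt_def)
qed

lemma P_X: "Pn n \<subseteq> Xn n" and L_X: "Ln n \<subseteq> Xn n" by (auto simp: Xn_def)

lemma tb_sub: assumes "a \<in> Ln n" "0 < e" shows "tildeBall n a e \<subseteq> Ball_n n a (2*e) \<inter> Xn n"
proof
  fix y assume y: "y \<in> tildeBall n a e"
  show "y \<in> Ball_n n a (2*e) \<inter> Xn n"
  proof (cases "y = a")
    case True then show ?thesis using assms by (auto simp: Ball_n_def Ln_def Xn_def)
  next
    case False
    then have yb: "y \<in> Ball_n n (lift_pt n a e) e" using y by (auto simp: tildeBall_def)
    have "edist n y a \<le> edist n y (lift_pt n a e) + edist n (lift_pt n a e) a" by (rule edist_tri)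
    also have "\<dots> < 2 * e" using yb edist_lift0[OF assms(1), of e] assms(2)
      by (auto simp: Ball_n_def edist_sym)
    finally show ?thesis using yb lift_ball_P[OF yb] P_X by (auto simp: Ball_n_def)
  qed
qed

lemma tb_mono: assumes "a \<in> Ln n" "0 < d" "d \<le> e" shows "tildeBall n a d \<subseteq> tildeBall n a e"
proof
  fix y assume y: "y \<in> tildeBall n a d"
  show "y \<in> tildeBall n a e"
  proof (cases "y = a")
    case True then show ?thesis by (auto simp: tildeBall_def)
  next
    case False
    then have yb: "y \<in> Ball_n n (lift_pt n a d) d" using y by (auto simp: tildeBall_def)
    have aR: "a \<in> Rn n" using assms by (auto simp: Ln_def)
    have "edist n y (lift_pt n a e) \<le> edist n y (lift_pt n a d) + edist n (lift_pt n a d) (lift_pt n a e)" by (rule edist_tri)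
    also have "\<dots> < e" using yb edist_lift[OF aR, of d e] assms
      by (auto simp: Ball_n_def)
    finally show ?thesis using yb by (auto simp: Ball_n_def tildeBall_def)
  qed
qed

lemma tb_L: "tildeBall n a e \<inter> Ln n \<subseteq> {a}"
proof
  fix y assume "y \<in> tildeBall n a e \<inter> Ln n"
  moreover have "y \<in> Ball_n n (lift_pt n a e) e \<Longrightarrow> y \<in> Pn n" by (rule lift_ball_P)
  ultimately show "y \<in> {a}" by (auto simp: tildeBall_def Ln_def Pn_def)
qed


definition lb where
  "lb x e = (if x \<in> Pn n then Ball_n n x (min e (x (n-1) / 2))
             else if x \<in> A then Ball_n n x e \<inter> Xn n else tildeBall n x e)"

lemma X_cases: "x \<in> Xn n \<Longrightarrow> (x \<in> Pn n \<Longrightarrow> P) \<Longrightarrow> (x \<in> A \<Longrightarrow> x \<notin> Pn n \<Longrightarrow> P)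
   \<Longrightarrow> (x \<in> Ln n - A \<Longrightarrow> x \<notin> Pn n \<Longrightarrow> P) \<Longrightarrow> P"
  unfolding Xn_def by blast

lemma lb_nbhd: assumes "x \<in> Xn n" "0 < e" shows "lb x e \<in> nbhd_sets n A"
  using assms(1)
proof (rule X_cases)
  assume x: "x \<in> Pn n"
  then have "0 < min e (x (n-1) / 2)" "min e (x (n-1) / 2) < x (n-1)" using assms by (auto simp: Pn_def)
  moreover have "lb x e = Ball_n n x (min e (x (n-1) / 2))" using x by (simp add: lb_def)
  ultimately show ?thesis using x unfolding nbhd_sets_def by blast
next
  assume x: "x \<in> A" "x \<notin> Pn n"
  then have "lb x e = Ball_n n x e \<inter> Xn n" by (simp add: lb_def)
  then show ?thesis using assms x unfolding nbhd_sets_def by blast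
next
  assume x: "x \<in> Ln n - A" "x \<notin> Pn n"
  then have "lb x e = tildeBall n x e" by (simp add: lb_def)
  then show ?thesis using assms x unfolding nbhd_sets_def by blast
qed

lemma lb_self: assumes "x \<in> Xn n" "0 < e" shows "x \<in> lb x e"
  using assms by (auto simp: lb_def Ball_n_def tildeBall_def Xn_def Pn_def Ln_def)

lemma lb_sub: assumes "x \<in> Xn n" "0 < e" shows "lb x e \<subseteq> Ball_n n x (2*e) \<inter> Xn n"
  using assms(1)
proof (rule X_cases)
  assume x: "x \<in> Pn n"
  show ?thesis
  proof
    fix y assume "y \<in> lb x e"
    then have y: "y \<in> Ball_n n x (min e (x (n-1) / 2))" using x by (simp add: lb_def)
    then have "y \<in> Pn n" by (rule ball_sub_P) (use x in \<open>auto simp: Pn_def\<close>)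
    then show "y \<in> Ball_n n x (2*e) \<inter> Xn n" using y assms P_X by (auto simp: Ball_n_def)
  qed
next
  assume "x \<in> A" "x \<notin> Pn n" then show ?thesis using assms by (auto simp: lb_def Ball_n_def)
next
  assume "x \<in> Ln n - A" "x \<notin> Pn n" then show ?thesis using assms tb_sub by (auto simp: lb_def)
qed

lemma lb_mono: assumes "x \<in> Xn n" "0 < d" "d \<le> e" shows "lb x d \<subseteq> lb x e"
  using assms(1)
proof (rule X_cases)
  assume x: "x \<in> Pn n"
  then show ?thesis using assms by (auto simp: lb_def Ball_n_def)
next
  assume "x \<in> A" "x \<notin> Pn n" then show ?thesis using assms by (auto simp: lb_def Ball_n_def)
next
  assume "x \<in> Ln n - A" "x \<notin> Pn n" then show ?thesis using assms tb_mono by (auto simp: lb_def)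
qed

lemma lb_ball: assumes "x \<in> Ball_n n c r" "x \<in> Xn n"
  shows "0 < (r - edist n x c)/2" "lb x ((r - edist n x c)/2) \<subseteq> Ball_n n c r \<inter> Xn n"
proof -
  show pos: "0 < (r - edist n x c)/2" using assms by (auto simp: Ball_n_def)
  show "lb x ((r - edist n x c)/2) \<subseteq> Ball_n n c r \<inter> Xn n"
  proof
    fix y assume "y \<in> lb x ((r - edist n x c)/2)"
    moreover have eq: "2 * ((r - edist n x c)/2) = r - edist n x c" by simp
    ultimately have y: "y \<in> Ball_n n x (r - edist n x c) \<inter> Xn n" using lb_sub[OF assms(2) pos, unfolded eq] by blast
    have "edist n y c \<le> edist n y x + edist n x c" by (rule edist_tri)
    also have "\<dots> < r" using y by (auto simp: Ball_n_def edist_sym)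
    finally show "y \<in> Ball_n n c r \<inter> Xn n" using y by (auto simp: Ball_n_def)
  qed
qed

lemma nbhd_X: "N \<in> nbhd_sets n A \<Longrightarrow> N \<subseteq> Xn n"
proof -
  assume "N \<in> nbhd_sets n A"
  then consider (1) a e where "N = Ball_n n a e" "a \<in> Pn n" "0 < e" "e < a (n-1)"
    | (2) a e where "N = Ball_n n a e \<inter> Xn n"
    | (3) a e where "N = tildeBall n a e" "a \<in> Ln n - A" "0 < e"
    unfolding nbhd_sets_def by blast
  then show ?thesis
  proof cases
    case 1 then show ?thesis using ball_sub_P[of _ a e] P_X by auto
  next
    case 2 then show ?thesis by auto
  next
    case 3 then show ?thesis using tb_sub by auto
  qed
qed

lemma nbhd_lb: assumes "N \<in> nbhd_sets n A" "x \<in> N" shows "\<exists>e>0. lb x e \<subseteq> N"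
proof -
  have xX: "x \<in> Xn n" using nbhd_X assms by auto
  from assms(1) consider (1) a e where "N = Ball_n n a e" "a \<in> Pn n" "0 < e" "e < a (n-1)"
    | (2) a e where "N = Ball_n n a e \<inter> Xn n"
    | (3) a e where "N = tildeBall n a e" "a \<in> Ln n - A" "0 < e"
    unfolding nbhd_sets_def by blast
  then show ?thesis
  proof cases
    case 1
    have "N \<subseteq> Xn n" using nbhd_X assms by auto
    then have "N = Ball_n n a e \<inter> Xn n" using 1 by auto
    moreover have xb: "x \<in> Ball_n n a e" using 1 assms by auto
    ultimately show ?thesis using lb_ball[OF xb xX] by metis
  next
    case 2
    moreover have xb: "x \<in> Ball_n n a e" using 2 assms by auto
    ultimately show ?thesis using lb_ball[OF xb xX] by metis
  next
    case 3
    show ?thesis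
    proof (cases "x = a")
      case True
      then have "lb x e = N" using 3 by (auto simp: lb_def Ln_def Pn_def)
      then show ?thesis using 3 by auto
    next
      case False
      then have xb: "x \<in> Ball_n n (lift_pt n a e) e" using 3 assms by (auto simp: tildeBall_def)
      have "Ball_n n (lift_pt n a e) e \<subseteq> N" using 3 by (auto simp: tildeBall_def)
      then show ?thesis using lb_ball[OF xb xX] by (meson inf.coboundedI1 order.trans)
    qed
  qed
qed

lemma gen_lb: "generate_topology_on (nbhd_sets n A) U \<Longrightarrow> U \<subseteq> Xn n \<and> (\<forall>x\<in>U. \<exists>e>0. lb x e \<subseteq> U)"
proof (induction rule: generate_topology_on.induct)
  case Empty then show ?case by simp
next
  case (Int a b)
  show ?case
  proof (intro conjI ballI)
    show "a \<inter> b \<subseteq> Xn n" using Int by auto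
    fix x assume x: "x \<in> a \<inter> b"
    then obtain d e where d: "d > 0" "lb x d \<subseteq> a" and e: "e > 0" "lb x e \<subseteq> b" using Int by blast
    have xX: "x \<in> Xn n" using Int x by auto
    have "lb x (min d e) \<subseteq> a \<inter> b" using lb_mono[OF xX, of "min d e" d] lb_mono[OF xX, of "min d e" e] d e by auto
    then show "\<exists>e>0. lb x e \<subseteq> a \<inter> b" using d e by (intro exI[of _ "min d e"]) auto
  qed
next
  case (UN K)
  then show ?case by blast
next
  case (Basis s)
  then show ?case using nbhd_X nbhd_lb by blast
qed

lemma open_tau_iff: "openin (tau n A) U \<longleftrightarrow> U \<subseteq> Xn n \<and> (\<forall>x\<in>U. \<exists>e>0. lb x e \<subseteq> U)"
proof
  assume "openin (tau n A) U"
  then show "U \<subseteq> Xn n \<and> (\<forall>x\<in>U. \<exists>e>0. lb x e \<subseteq> U)"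
    using gen_lb unfolding tau_def openin_topology_generated_by_iff by blast
next
  assume H: "U \<subseteq> Xn n \<and> (\<forall>x\<in>U. \<exists>e>0. lb x e \<subseteq> U)"
  then obtain f where f: "\<And>x. x \<in> U \<Longrightarrow> f x > 0 \<and> lb x (f x) \<subseteq> U" by metis
  have "U = \<Union>((\<lambda>x. lb x (f x)) ` U)" using f H lb_self by blast
  moreover have "generate_topology_on (nbhd_sets n A) (\<Union>((\<lambda>x. lb x (f x)) ` U))"
  proof (rule generate_topology_on.UN)
    fix k assume "k \<in> (\<lambda>x. lb x (f x)) ` U"
    then obtain x where "x \<in> U" "k = lb x (f x)" by blast
    then show "generate_topology_on (nbhd_sets n A) k"
    proof -
      have "x \<in> Xn n" "0 < f x" using f H \<open>x \<in> U\<close> by auto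
      then have "lb x (f x) \<in> nbhd_sets n A" by (rule lb_nbhd)
      then show ?thesis using \<open>k = lb x (f x)\<close> by (simp add: generate_topology_on.Basis)
    qed
  qed
  ultimately show "openin (tau n A) U" unfolding tau_def openin_topology_generated_by_iff by simp
qed

lemma open_lb: "x \<in> Xn n \<Longrightarrow> 0 < e \<Longrightarrow> openin (tau n A) (lb x e)"
  unfolding tau_def openin_topology_generated_by_iff
  by (rule generate_topology_on.Basis, rule lb_nbhd)

lemma open_ballX: "openin (tau n A) (Ball_n n c r \<inter> Xn n)"
  unfolding open_tau_iff using lb_ball by blast

lemma open_X: "openin (tau n A) (Xn n)"
  unfolding open_tau_iff
proof (intro conjI ballI)
  fix x assume "x \<in> Xn n"
  then show "\<exists>e>0. lb x e \<subseteq> Xn n" using lb_sub[of x 1] by (intro exI[of _ 1]) auto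
qed simp

lemma topspace_tau: "topspace (tau n A) = Xn n"
  using open_X openin_subset[of "tau n A"] open_tau_iff openin_topspace by blast


lemma small_Suc: assumes "0 < (m::real)" shows "\<exists>k. 1 / real (Suc k) < m"
proof -
  obtain N::nat where N: "N > 0" "inverse (real N) < m" using ex_inverse_of_nat_less[OF assms] by blast
  then have "Suc (N - 1) = N" by simp
  then show ?thesis using N by (intro exI[of _ "N - 1"]) (simp add: inverse_eq_divide)
qed

lemma open_P: "openin (tau n A) (Pn n)"
  unfolding open_tau_iff
proof (intro conjI ballI)
  show "Pn n \<subseteq> Xn n" by (rule P_X)
  fix x assume x: "x \<in> Pn n"
  have "lb x 1 \<subseteq> Pn n"
  proof
    fix y assume "y \<in> lb x 1"
    then have y: "y \<in> Ball_n n x (min 1 (x (n-1) / 2))" using x by (simp add: lb_def)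
    then show "y \<in> Pn n" by (rule ball_sub_P) (use x in \<open>auto simp: Pn_def\<close>)
  qed
  then show "\<exists>e>0. lb x e \<subseteq> Pn n" by (intro exI[of _ 1]) auto
qed

lemma open_XA: "openin (tau n A) (Xn n - A)"
  unfolding open_tau_iff
proof (intro conjI ballI)
  show "Xn n - A \<subseteq> Xn n" by auto
  fix x assume x: "x \<in> Xn n - A"
  show "\<exists>e>0. lb x e \<subseteq> Xn n - A"
  proof (cases "x \<in> Pn n")
    case True
    then obtain e where "e > 0" "lb x e \<subseteq> Pn n" using open_P open_tau_iff by blast
    moreover have "Pn n \<inter> A = {}" using AL by (auto simp: Pn_def Ln_def)
    ultimately show ?thesis using P_X by blast
  next
    case False
    then have xL: "x \<in> Ln n - A" "lb x 1 = tildeBall n x 1" using x by (auto simp: lb_def Xn_def)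
    have "tildeBall n x 1 \<subseteq> Xn n" using tb_sub[of x 1] xL by auto
    moreover have "tildeBall n x 1 \<inter> A = {}" using tb_L[of x 1] AL xL by auto
    ultimately show ?thesis using xL by (intro exI[of _ 1]) auto
  qed
qed

lemma edist_pos: assumes "x \<in> Rn n" "y \<in> Rn n" "x \<noteq> y" shows "0 < edist n x y"
proof -
  obtain i where i: "x i \<noteq> y i" using assms by auto
  then have "i < n" using assms by (auto simp: Rn_def)
  then have "\<bar>x i - y i\<bar> \<le> edist n x y" by (rule edist_coord)
  then show ?thesis using i by auto
qed

lemma compactinE':
  assumes "compactin X K" "\<forall>U\<in>\<U>. openin X U" "K \<subseteq> \<Union>\<U>"
  obtains F where "finite F" "F \<subseteq> \<U>" "K \<subseteq> \<Union>F"
  using assms unfolding compactin_def by blast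

lemma compact_countable:
  assumes K: "compactin (tau n A) K"
  shows "countable (K \<inter> (Ln n - A))"
proof -
  have KX: "K \<subseteq> Xn n" using K topspace_tau by (auto simp: compactin_def)
  define D where "D k = {d \<in> K \<inter> (Ln n - A). \<forall>a \<in> K \<inter> A. 1 / real (Suc k) \<le> edist n d a}" for k
  have finD: "finite (D k)" for k
  proof -
    define U where "U = \<Union>((\<lambda>a. Ball_n n a (1 / real (Suc k)) \<inter> Xn n) ` (K \<inter> A))"
    have Uo: "openin (tau n A) U" unfolding U_def by (rule openin_Union) (auto intro: open_ballX)
    define \<U> where "\<U> = {Pn n, U} \<union> (\<lambda>d. tildeBall n d 1) ` D k"
    have tbo: "openin (tau n A) (tildeBall n d 1)" if "d \<in> D k" for d
    proof -
      have "d \<in> Ln n - A" "d \<in> Xn n" using that KX by (auto simp: D_def)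
      then have "lb d 1 = tildeBall n d 1" by (auto simp: lb_def Ln_def Pn_def)
      then show ?thesis using open_lb[OF \<open>d \<in> Xn n\<close>, of 1] by simp
    qed
    have opU: "\<forall>V\<in>\<U>. openin (tau n A) V" unfolding \<U>_def using open_P Uo tbo by auto
    have covU: "K \<subseteq> \<Union>\<U>"
    proof
      fix y assume y: "y \<in> K"
      show "y \<in> \<Union>\<U>"
      proof (cases "y \<in> Pn n")
        case True then show ?thesis by (auto simp: \<U>_def)
      next
        case False
        then have yL: "y \<in> Ln n" using y KX by (auto simp: Xn_def)
        show ?thesis
        proof (cases "y \<in> U")
          case True then show ?thesis by (auto simp: \<U>_def)
        next
          case False
          have "y \<in> Ball_n n y (1 / real (Suc k)) \<inter> Xn n" using y KX
            by (auto simp: Ball_n_def Xn_def Pn_def Ln_def)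
          then have "y \<notin> A" using False y unfolding U_def by blast
          moreover have "\<forall>a \<in> K \<inter> A. 1 / real (Suc k) \<le> edist n y a"
          proof
            fix a assume "a \<in> K \<inter> A"
            moreover have "y \<in> Rn n" "y \<in> Xn n" using yL by (auto simp: Ln_def Xn_def)
            ultimately show "1 / real (Suc k) \<le> edist n y a"
              using False unfolding U_def Ball_n_def by (auto simp: not_less)
          qed
          ultimately have "y \<in> D k" using y yL by (auto simp: D_def)
          then have "y \<in> tildeBall n y 1" by (simp add: tildeBall_def)
          then show ?thesis using \<open>y \<in> D k\<close> by (auto simp: \<U>_def)
        qed
      qed
    qed
    obtain F where F: "finite F" "F \<subseteq> \<U>" "K \<subseteq> \<Union>F"
      by (rule compactinE'[OF K opU covU])
    have "F \<inter> (\<lambda>d. tildeBall n d 1) ` D k \<subseteq> (\<lambda>d. tildeBall n d 1) ` D k" by auto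
    moreover have "finite (F \<inter> (\<lambda>d. tildeBall n d 1) ` D k)" using F by auto
    ultimately obtain G where G: "G \<subseteq> D k" "finite G"
      "F \<inter> (\<lambda>d. tildeBall n d 1) ` D k = (\<lambda>d. tildeBall n d 1) ` G"
      by (metis finite_subset_image)
    have "D k \<subseteq> G"
    proof
      fix y assume yD: "y \<in> D k"
      then obtain T where T: "T \<in> F" "y \<in> T" using F by (auto simp: D_def)
      have yL: "y \<in> Ln n" "y \<notin> Pn n" using yD by (auto simp: D_def Ln_def Pn_def)
      have "y \<notin> U"
      proof
        assume "y \<in> U"
        then obtain a where a: "a \<in> K \<inter> A" "edist n y a < 1 / real (Suc k)"
          unfolding U_def Ball_n_def by auto
        have "\<forall>a \<in> K \<inter> A. 1 / real (Suc k) \<le> edist n y a" using yD by (simp add: D_def)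
        then have "1 / real (Suc k) \<le> edist n y a" using a(1) by blast
        then show False using a(2) by linarith
      qed
      have T1: "T \<noteq> Pn n" using T(2) yL(2) by metis
      have T2: "T \<noteq> U" using T(2) \<open>y \<notin> U\<close> by metis
      have T3: "T \<in> \<U>" using T(1) F(2) by (rule subsetD[rotated])
      have "T \<in> insert (Pn n) (insert U ((\<lambda>d. tildeBall n d 1) ` D k))" using T3 by (simp only: \<U>_def insert_is_Un[symmetric] Un_insert_left sup_bot_left)
      then have "T \<in> (\<lambda>d. tildeBall n d 1) ` D k" using T1 T2 by (elim insertE) simp_all
      then have "T \<in> F \<inter> (\<lambda>d. tildeBall n d 1) ` D k" using T(1) by (rule IntI[rotated])
      then have "T \<in> (\<lambda>d. tildeBall n d 1) ` G" unfolding G(3) .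
      then obtain d where d: "d \<in> G" "T = tildeBall n d 1" by (rule imageE)
      then have "y \<in> tildeBall n d 1 \<inter> Ln n" using T(2) yL(1) by simp
      then have "y = d" using tb_L[of d 1] by blast
      then show "y \<in> G" using d by simp
    qed
    then show ?thesis using G finite_subset by blast
  qed
  have cov: "K \<inter> (Ln n - A) \<subseteq> (\<Union>k. D k)"
  proof
    fix d assume d: "d \<in> K \<inter> (Ln n - A)"
    have dR: "d \<in> Rn n" using d by (auto simp: Ln_def)
    define \<V> where "\<V> = insert (Xn n - A) ((\<lambda>a. Ball_n n a (edist n a d / 2) \<inter> Xn n) ` (K \<inter> A))"
    have opV: "\<forall>V\<in>\<V>. openin (tau n A) V" unfolding \<V>_def using open_XA open_ballX by auto
    have covV: "K \<subseteq> \<Union>\<V>"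
    proof
      fix y assume y: "y \<in> K"
      show "y \<in> \<Union>\<V>"
      proof (cases "y \<in> A")
        case True
        have yR: "y \<in> Rn n" using True AL by (auto simp: Ln_def)
        have "y \<noteq> d" using True d by auto
        then have "0 < edist n y d" using edist_pos[OF yR dR] by simp
        then have "y \<in> Ball_n n y (edist n y d / 2) \<inter> Xn n" using y KX yR by (auto simp: Ball_n_def)
        then show ?thesis using True y unfolding \<V>_def by blast
      next
        case False then show ?thesis using y KX unfolding \<V>_def by blast
      qed
    qed
    obtain F where F: "finite F" "F \<subseteq> \<V>" "K \<subseteq> \<Union>F"
      by (rule compactinE'[OF K opV covV])
    have sub: "F - {Xn n - A} \<subseteq> (\<lambda>a. Ball_n n a (edist n a d / 2) \<inter> Xn n) ` (K \<inter> A)"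
    proof
      fix T assume T: "T \<in> F - {Xn n - A}"
      then have "T \<in> \<V>" using F(2) by (intro subsetD[OF F(2)]) simp
      then have "T \<in> insert (Xn n - A) ((\<lambda>a. Ball_n n a (edist n a d / 2) \<inter> Xn n) ` (K \<inter> A))"
        by (simp only: \<V>_def)
      then show "T \<in> (\<lambda>a. Ball_n n a (edist n a d / 2) \<inter> Xn n) ` (K \<inter> A)" using T by (elim insertE) simp_all
    qed
    have fin: "finite (F - {Xn n - A})" using F(1) by simp
    obtain G where G: "G \<subseteq> K \<inter> A" "finite G"
      "F - {Xn n - A} = (\<lambda>a. Ball_n n a (edist n a d / 2) \<inter> Xn n) ` G"
      using finite_subset_image[OF fin sub] by (elim exE conjE) (rule that)
    define m where "m = Min (insert 1 ((\<lambda>b. edist n b d / 2) ` G))"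
    have mpos: "0 < m" unfolding m_def
    proof (subst Min_gr_iff)
      show "finite (insert 1 ((\<lambda>b. edist n b d / 2) ` G))" using G(2) by simp
      show "insert 1 ((\<lambda>b. edist n b d / 2) ` G) \<noteq> {}" by auto
      show "\<forall>a\<in>insert 1 ((\<lambda>b. edist n b d / 2) ` G). 0 < a"
      proof
        fix a assume "a \<in> insert 1 ((\<lambda>b. edist n b d / 2) ` G)"
        then consider "a = 1" | b where "b \<in> G" "a = edist n b d / 2" by auto
        then show "0 < a"
        proof cases
          case 2
          then have bR: "b \<in> Rn n" "b \<noteq> d" using G(1) AL d by (auto simp: Ln_def)
          have "0 < edist n b d" by (rule edist_pos[OF bR(1) dR bR(2)])
          then show ?thesis using 2 by simp
        qed simp
      qed
    qed
    obtain k where k: "1 / real (Suc k) < m" using small_Suc[OF mpos] by blast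
    have "\<forall>a \<in> K \<inter> A. 1 / real (Suc k) \<le> edist n d a"
    proof
      fix a assume a: "a \<in> K \<inter> A"
      then obtain T where T: "T \<in> F" "a \<in> T" using F(3) by blast
      then have "T \<noteq> Xn n - A" using a by blast
      then have "T \<in> F - {Xn n - A}" using T(1) by blast
      then have "T \<in> (\<lambda>a. Ball_n n a (edist n a d / 2) \<inter> Xn n) ` G" unfolding G(3) .
      then obtain b where b: "b \<in> G" "T = Ball_n n b (edist n b d / 2) \<inter> Xn n" by blast
      then have ab: "edist n a b < edist n b d / 2" using T(2) by (simp add: Ball_n_def)
      have "m \<le> edist n b d / 2" unfolding m_def using G(2) b(1) by (intro Min_le) auto
      moreover have "edist n b d \<le> edist n b a + edist n a d" by (rule edist_tri)
      ultimately show "1 / real (Suc k) \<le> edist n d a" using ab k edist_sym[of n a b] edist_sym[of n a d] by linarith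
    qed
    then have "d \<in> D k" using d by (simp add: D_def)
    then show "d \<in> (\<Union>k. D k)" by (rule UN_I[OF UNIV_I])
  qed
  have "countable (\<Union>k. D k)" by (rule countable_UN) (simp_all add: countable_finite[OF finD])
  then show ?thesis by (rule countable_subset[OF cov])
qed


definition Qn where "Qn = {q \<in> Rn n. \<forall>i. q i \<in> \<rat>}"

lemma countable_Qn: "countable Qn"
proof -
  define g where "g = (\<lambda>(f::nat \<Rightarrow> real) i. if i < n then f i else 0)"
  have "Qn \<subseteq> g ` (PiE {..<n} (\<lambda>_. \<rat>))"
  proof
    fix q assume q: "q \<in> Qn"
    have "q = g (restrict q {..<n})" using q unfolding g_def Qn_def Rn_def by (auto simp: fun_eq_iff)
    moreover have "restrict q {..<n} \<in> PiE {..<n} (\<lambda>_. \<rat>)" using q unfolding Qn_def by auto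
    ultimately show "q \<in> g ` (PiE {..<n} (\<lambda>_. \<rat>))" by (rule image_eqI)
  qed
  moreover have "countable (g ` (PiE {..<n} (\<lambda>_. \<rat>)))"
    by (intro countable_image countable_PiE) (auto simp: countable_rat)
  ultimately show ?thesis by (rule countable_subset)
qed

lemma rat_approx: assumes "x \<in> Rn n" "0 < e" shows "\<exists>q\<in>Qn. edist n x q < e"
proof -
  define c where "c = e / (real n + 1)"
  have c: "0 < c" using assms by (simp add: c_def)
  have "\<forall>i. \<exists>r. r \<in> \<rat> \<and> x i < r \<and> r < x i + c"
  proof
    fix i
    have "x i < x i + c" using c by simp
    then show "\<exists>r. r \<in> \<rat> \<and> x i < r \<and> r < x i + c" using Rats_dense_in_real by blast
  qed
  then obtain r where r: "\<And>i. r i \<in> \<rat> \<and> x i < r i \<and> r i < x i + c" using choice by metis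
  define q where "q = (\<lambda>i. if i < n then r i else 0)"
  have qQ: "q \<in> Qn" using r unfolding q_def Qn_def Rn_def by auto
  have "edist n x q = L2_set (\<lambda>i. x i - q i) {..<n}" by (rule edist_L2)
  also have "\<dots> \<le> (\<Sum>i<n. \<bar>x i - q i\<bar>)" by (rule L2_set_le_sum_abs)
  also have "\<dots> \<le> (\<Sum>i<n. c)"
  proof (rule sum_mono)
    fix i assume "i \<in> {..<n}"
    then show "\<bar>x i - q i\<bar> \<le> c" using r[of i] unfolding q_def by auto
  qed
  also have "\<dots> = real n * c" by simp
  also have "\<dots> < e" using assms unfolding c_def by (simp add: field_simps)
  finally show ?thesis using qQ by blast
qed

lemma second_countable_tau:
  assumes cL: "countable (Ln n - A)"
  shows "second_countable (tau n A)"
proof -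
  define B where "B = (\<lambda>(q,r). Ball_n n q r \<inter> Xn n) ` (Qn \<times> \<rat>)
     \<union> (\<lambda>(d,k). tildeBall n d (1 / real (Suc k))) ` ((Ln n - A) \<times> (UNIV::nat set))"
  have "countable B" unfolding B_def
    using countable_Qn countable_rat cL by (intro countable_Un countable_image countable_SIGMA) auto
  moreover have "\<forall>V\<in>B. openin (tau n A) V"
  proof
    fix V assume "V \<in> B"
    consider (1) q r where "V = Ball_n n q r \<inter> Xn n"
      | (2) d k where "d \<in> Ln n - A" "V = tildeBall n d (1 / real (Suc k))"
      using \<open>V \<in> B\<close> unfolding B_def by auto
    then show "openin (tau n A) V"
    proof cases
      case 1 then show ?thesis using open_ballX by simp
    next
      case 2
      then have "d \<in> Xn n" "lb d (1 / real (Suc k)) = V" by (auto simp: lb_def Xn_def Ln_def Pn_def)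
      then show ?thesis using open_lb[of d "1 / real (Suc k)"] by simp
    qed
  qed
  moreover have "\<forall>U x. openin (tau n A) U \<and> x \<in> U \<longrightarrow> (\<exists>V\<in>B. x \<in> V \<and> V \<subseteq> U)"
  proof (intro allI impI)
    fix U x assume H: "openin (tau n A) U \<and> x \<in> U"
    then have xX: "x \<in> Xn n" and "\<exists>e>0. lb x e \<subseteq> U" using open_tau_iff by blast+
    then obtain e where e: "0 < e" "lb x e \<subseteq> U" by blast
    show "\<exists>V\<in>B. x \<in> V \<and> V \<subseteq> U"
    proof (cases "x \<in> Ln n - A")
      case True
      obtain k where k: "1 / real (Suc k) < e" using small_Suc[OF e(1)] by blast
      have pos: "0 < 1 / real (Suc k)" by simp
      have "lb x (1 / real (Suc k)) = tildeBall n x (1 / real (Suc k))"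
        using True by (auto simp: lb_def Ln_def Pn_def)
      moreover have "tildeBall n x (1 / real (Suc k)) \<in> B" using True unfolding B_def by blast
      moreover have "lb x (1 / real (Suc k)) \<subseteq> U" using lb_mono[OF xX pos, of e] k e(2) by simp
      moreover have "x \<in> lb x (1 / real (Suc k))" by (rule lb_self[OF xX pos])
      ultimately show ?thesis by metis
    next
      case False
      have "\<exists>\<delta>>0. Ball_n n x \<delta> \<inter> Xn n \<subseteq> lb x e"
      proof (cases "x \<in> Pn n")
        case True
        then have "0 < min e (x (n-1) / 2)" using e by (auto simp: Pn_def)
        moreover have "lb x e = Ball_n n x (min e (x (n-1) / 2))" using True by (simp add: lb_def)
        ultimately show ?thesis by blast
      next
        case False
        then have "x \<in> A" using xX \<open>x \<notin> Ln n - A\<close> by (auto simp: Xn_def)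
        then have "lb x e = Ball_n n x e \<inter> Xn n" using False by (simp add: lb_def)
        then show ?thesis using e by blast
      qed
      then obtain \<delta> where d: "0 < \<delta>" "Ball_n n x \<delta> \<inter> Xn n \<subseteq> lb x e" by blast
      have xR: "x \<in> Rn n" using xX by (auto simp: Xn_def Pn_def Ln_def)
      obtain q where q: "q \<in> Qn" "edist n x q < \<delta> / 3" using rat_approx[OF xR, of "\<delta>/3"] d by auto
      have "\<delta> / 3 < \<delta> / 2" using d by simp
      then obtain r where r: "r \<in> \<rat>" "\<delta> / 3 < r" "r < \<delta> / 2" using Rats_dense_in_real by blast
      have inB: "Ball_n n q r \<inter> Xn n \<in> B" using q r unfolding B_def by blast
      have qR: "q \<in> Rn n" using q unfolding Qn_def by simp
      have xin: "x \<in> Ball_n n q r \<inter> Xn n" using xX xR q r by (auto simp: Ball_n_def edist_sym)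
      have "Ball_n n q r \<inter> Xn n \<subseteq> Ball_n n x \<delta> \<inter> Xn n"
      proof
        fix y assume y: "y \<in> Ball_n n q r \<inter> Xn n"
        have "edist n y x \<le> edist n y q + edist n q x" by (rule edist_tri)
        moreover have "edist n y q < r" using y by (simp add: Ball_n_def)
        moreover have "edist n q x < \<delta> / 3" using q(2) by (simp add: edist_sym)
        ultimately have "edist n y x < \<delta>" using r by linarith
        then show "y \<in> Ball_n n x \<delta> \<inter> Xn n" using y by (simp add: Ball_n_def)
      qed
      then have "Ball_n n q r \<inter> Xn n \<subseteq> U" using d(2) e(2) by blast
      then show ?thesis using inB xin by blast
    qed
  qed
  ultimately show ?thesis unfolding second_countable_def by blast
qed

end

lemma main_aux:
  fixes n :: nat and A :: "(nat \<Rightarrow> real) set"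
  assumes n2: "n \<ge> 2" and AL: "A \<subseteq> Ln n"
    and sc: "sigma_compact_space (tau n A)"
  shows "second_countable (tau n A)"
proof -
  from sc obtain \<K> where K: "countable \<K>" "\<forall>K\<in>\<K>. compactin (tau n A) K" "\<Union>\<K> = topspace (tau n A)"
    unfolding sigma_compact_space_def by (elim exE conjE) (rule that)
  have top: "topspace (tau n A) = Xn n" by (rule topspace_tau[OF n2 AL])
  have sub: "Ln n - A \<subseteq> (\<Union>K\<in>\<K>. K \<inter> (Ln n - A))"
  proof
    fix x assume x: "x \<in> Ln n - A"
    then have "x \<in> Xn n" by (simp add: Xn_def)
    then have "x \<in> \<Union>\<K>" using K(3) top by simp
    then obtain K where "K \<in> \<K>" "x \<in> K" by (rule UnionE)
    then show "x \<in> (\<Union>K\<in>\<K>. K \<inter> (Ln n - A))" using x by (intro UN_I) simp_all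
  qed
  have "countable (\<Union>K\<in>\<K>. K \<inter> (Ln n - A))"
  proof (rule countable_UN[OF K(1)])
    fix K assume "K \<in> \<K>"
    then have "compactin (tau n A) K" using K(2) by (rule bspec[rotated])
    then show "countable (K \<inter> (Ln n - A))" by (rule compact_countable[OF n2 AL])
  qed
  then have "countable (Ln n - A)" using sub by (rule countable_subset[rotated])
  then show ?thesis by (rule second_countable_tau[OF n2 AL])
qed


theorem mainTheorem15:
  fixes n :: nat and A :: "(nat \<Rightarrow> real) set"
  assumes "n \<ge> 2" and "A \<subseteq> Ln n"
    and "sigma_compact_space (tau n A)"
  shows "second_countable (tau n A)"
  using assms by (rule main_aux)

end
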